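(* Let $V:\mathbb R^3\to\mathbb R$ be continuous with $0<\min V=:V_0$ and $0\in M:=\{x:V(x)=V_0\}$; let $f:\mathbb R\to\mathbb R$ be continuous with $f(u)\ge0$ for $u\ge0$, $f(u)=0$ for $u\le0$, such that there is $q\in(2,6)$ with $\lim_{u\to\infty}f(u)/u^{q-1}=0$ and $\lim_{u\to0}f(u)/u=0$. Let $\mathfrak u$ be a radial, nonpositive function attaining $\min_{u\in\mathcal M_{V_0}}E_{V_0}(u)$, let $T>0$ and $\rho>0$ with $\{x\in\mathbb R^3:d(x,M)\le 2T\}\subset B_\rho$, and let $\Phi_\varepsilon$ and $\beta_\varepsilon$ be as in the context. Then $$\lim_{\varepsilon\to0^+}\beta_\varepsilon(\Phi_\varepsilon(y))=y\quad\text{uniformly in }y\in M.$$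
   Context: $F(t)=\int_0^tf$. $W_\varepsilon=\{u\in H^1(\mathbb R^3):\int V(\varepsilon x)u^2<\infty\}$. $\phi_u(x)=\int\frac{1-e^{-|x-y|}}{|x-y|}u^2(y)dy$, $\mathcal M_\varepsilon=\{u\in W_\varepsilon:\int\phi_uu^2=1\}$. $E_{V_0}(u)=\frac12\int|\nabla u|^2+\frac{V_0}2\int u^2+\int F(u)$ on $H^1(\mathbb R^3)$, $\mathcal M_{V_0}=\{u\in H^1(\mathbb R^3):\int\phi_uu^2=1\}$. For $u\ne0$, $t_\varepsilon(u)>0$ is the unique number with $t_\varepsilon(u)u\in\mathcal M_\varepsilon$. $\eta:[0,\infty)\to[0,1]$ is smooth nonincreasing with $\eta=1$ on $[0,T/2]$, $\eta=0$ on $[T,\infty)$. For $y\in M$, $\Psi_{\varepsilon,y}(x)=\eta(|\varepsilon x-y|)\mathfrak u\big(\frac{\varepsilon x-y}{\varepsilon}\big)$ and $\Phi_\varepsilon(y)=t_\varepsilon(\Psi_{\varepsilon,y})\Psi_{\varepsilon,y}$. $\chi:\mathbb R^3\to\mathbb R^3$, $\chi(x)=x$ if $|x|\le\rho$, $\chi(x)=\rho x/|x|$ if $|x|\ge\rho$. For compactly supported $u\in W_\varepsilon\setminus\{0\}$, $\beta_\varepsilon(u)=\dfrac{\int\chi(\varepsilon x)u^2}{\int u^2}\in\mathbb R^3$. *)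

theory Defs
  imports "HOL-Analysis.Analysis"
begin

type_synonym R3 = "real ^ 3"

definition weak_grad :: "(R3 \<Rightarrow> real) \<Rightarrow> (R3 \<Rightarrow> R3) \<Rightarrow> bool" where
  "weak_grad u g \<longleftrightarrow> (\<forall>i. (\<lambda>x. g x $ i) \<in> borel_measurable lborel) \<and>
     (\<forall>\<phi> \<phi>'. bounded {x. \<phi> x \<noteq> 0} \<and> (\<forall>x. (\<phi> has_derivative \<phi>' x) (at x)) \<and>
           (\<forall>i. continuous_on UNIV (\<lambda>x. \<phi>' x (axis i 1))) \<longrightarrow>
        (\<forall>i. integrable lborel (\<lambda>x. u x * \<phi>' x (axis i 1)) \<and>
             integrable lborel (\<lambda>x. g x $ i * \<phi> x) \<and>
             (\<integral>x. u x * \<phi>' x (axis i 1) \<partial>lborel) = - (\<integral>x. g x $ i * \<phi> x \<partial>lborel)))"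

definition H1 :: "(R3 \<Rightarrow> real) set" where
  "H1 = {u. u \<in> borel_measurable lborel \<and> integrable lborel (\<lambda>x. (u x)\<^sup>2) \<and>
            (\<exists>g. weak_grad u g \<and> integrable lborel (\<lambda>x. (norm (g x))\<^sup>2))}"

definition grad :: "(R3 \<Rightarrow> real) \<Rightarrow> R3 \<Rightarrow> R3" where
  "grad u = (SOME g. weak_grad u g \<and> integrable lborel (\<lambda>x. (norm (g x))\<^sup>2))"

definition F_prim :: "(real \<Rightarrow> real) \<Rightarrow> real \<Rightarrow> real" where
  "F_prim f t = (LBINT s=0..t. f s)"

definition W_sp :: "(R3 \<Rightarrow> real) \<Rightarrow> real \<Rightarrow> (R3 \<Rightarrow> real) set" where
  "W_sp V \<epsilon> = {u \<in> H1. integrable lborel (\<lambda>x. V (\<epsilon> *\<^sub>R x) * (u x)\<^sup>2)}"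

definition phi_pot :: "(R3 \<Rightarrow> real) \<Rightarrow> R3 \<Rightarrow> real" where
  "phi_pot u x = (\<integral>y. (1 - exp (- dist x y)) / dist x y * (u y)\<^sup>2 \<partial>lborel)"

definition Neh_eps :: "(R3 \<Rightarrow> real) \<Rightarrow> real \<Rightarrow> (R3 \<Rightarrow> real) set" where
  "Neh_eps V \<epsilon> = {u \<in> W_sp V \<epsilon>. (\<integral>x. phi_pot u x * (u x)\<^sup>2 \<partial>lborel) = 1}"

definition E_V0 :: "(real \<Rightarrow> real) \<Rightarrow> real \<Rightarrow> (R3 \<Rightarrow> real) \<Rightarrow> real" where
  "E_V0 f V0 u = 1/2 * (\<integral>x. (norm (grad u x))\<^sup>2 \<partial>lborel) + V0 / 2 * (\<integral>x. (u x)\<^sup>2 \<partial>lborel)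
                 + (\<integral>x. F_prim f (u x) \<partial>lborel)"

definition Neh_V0 :: "(R3 \<Rightarrow> real) set" where
  "Neh_V0 = {u \<in> H1. (\<integral>x. phi_pot u x * (u x)\<^sup>2 \<partial>lborel) = 1}"

definition t_eps :: "(R3 \<Rightarrow> real) \<Rightarrow> real \<Rightarrow> (R3 \<Rightarrow> real) \<Rightarrow> real" where
  "t_eps V \<epsilon> u = (THE t. t > 0 \<and> (\<lambda>x. t * u x) \<in> Neh_eps V \<epsilon>)"

definition Psi :: "(real \<Rightarrow> real) \<Rightarrow> (R3 \<Rightarrow> real) \<Rightarrow> real \<Rightarrow> R3 \<Rightarrow> R3 \<Rightarrow> real" where
  "Psi \<eta> uu \<epsilon> y x = \<eta> (norm (\<epsilon> *\<^sub>R x - y)) * uu ((1 / \<epsilon>) *\<^sub>R (\<epsilon> *\<^sub>R x - y))"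

definition Phi :: "(R3 \<Rightarrow> real) \<Rightarrow> (real \<Rightarrow> real) \<Rightarrow> (R3 \<Rightarrow> real) \<Rightarrow> real \<Rightarrow> R3 \<Rightarrow> R3 \<Rightarrow> real" where
  "Phi V \<eta> uu \<epsilon> y = (\<lambda>x. t_eps V \<epsilon> (Psi \<eta> uu \<epsilon> y) * Psi \<eta> uu \<epsilon> y x)"

definition chi :: "real \<Rightarrow> R3 \<Rightarrow> R3" where
  "chi \<rho> x = (if norm x \<le> \<rho> then x else (\<rho> / norm x) *\<^sub>R x)"

definition beta :: "real \<Rightarrow> real \<Rightarrow> (R3 \<Rightarrow> real) \<Rightarrow> R3" where
  "beta \<rho> \<epsilon> u = (\<integral>x. (u x)\<^sup>2 *\<^sub>R chi \<rho> (\<epsilon> *\<^sub>R x) \<partial>lborel) /\<^sub>R (\<integral>x. (u x)\<^sup>2 \<partial>lborel)"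

end

theory Submission
  imports Defs
begin

lemma distr_uminus_R3: "distr lborel borel (\<lambda>x::R3. - x) = lborel"
  using lborel_affine[of "-1" "0::R3"] by (simp add: density_1)

lemma lb_trans:
  fixes f :: "R3 \<Rightarrow> 'b::{banach,second_countable_topology}"
  assumes [measurable]: "f \<in> borel_measurable lborel"
  shows "integrable lborel (\<lambda>x. f (x - a)) \<longleftrightarrow> integrable lborel f"
    and "(\<integral>x. f (x - a) \<partial>lborel) = integral\<^sup>L lborel f"
proof -
  have m: "(\<lambda>x. f (x - a)) \<in> borel_measurable borel" by measurable
  have "integrable lborel (\<lambda>x. f (x - a)) \<longleftrightarrow> integrable (distr lborel borel ((+) a)) (\<lambda>x. f (x - a))"
    by (simp add: lborel_distr_plus)
  also have "\<dots> \<longleftrightarrow> integrable lborel f"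
    by (subst integrable_distr_eq) (auto simp: m)
  finally show "integrable lborel (\<lambda>x. f (x - a)) \<longleftrightarrow> integrable lborel f" .
  have "(\<integral>x. f (x - a) \<partial>lborel) = (\<integral>x. f (x - a) \<partial>distr lborel borel ((+) a))"
    by (simp add: lborel_distr_plus)
  also have "\<dots> = integral\<^sup>L lborel f"
    by (subst integral_distr) (auto simp: m)
  finally show "(\<integral>x. f (x - a) \<partial>lborel) = integral\<^sup>L lborel f" .
qed

lemma lb_trans_plus:
  fixes f :: "R3 \<Rightarrow> 'b::{banach,second_countable_topology}"
  assumes [measurable]: "f \<in> borel_measurable lborel"
  shows "integrable lborel (\<lambda>x. f (a + x)) \<longleftrightarrow> integrable lborel f"
    and "(\<integral>x. f (a + x) \<partial>lborel) = integral\<^sup>L lborel f"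
proof -
  have "integrable lborel (\<lambda>x. f (a + x)) \<longleftrightarrow> integrable (distr lborel borel ((+) a)) f"
    by (subst integrable_distr_eq) auto
  then show "integrable lborel (\<lambda>x. f (a + x)) \<longleftrightarrow> integrable lborel f" by (simp add: lborel_distr_plus)
  have "(\<integral>x. f (a + x) \<partial>lborel) = (\<integral>x. f x \<partial>distr lborel borel ((+) a))"
    by (subst integral_distr) auto
  then show "(\<integral>x. f (a + x) \<partial>lborel) = integral\<^sup>L lborel f" by (simp add: lborel_distr_plus)
qed

lemma lb_reflect:
  fixes f :: "R3 \<Rightarrow> 'b::{banach,second_countable_topology}"
  assumes [measurable]: "f \<in> borel_measurable lborel"
  shows "(\<integral>x. f (- x) \<partial>lborel) = integral\<^sup>L lborel f"
proof -
  have "(\<integral>x. f (- x) \<partial>lborel) = (\<integral>x. f x \<partial>distr lborel borel uminus)"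
    by (subst integral_distr) auto
  then show ?thesis using distr_uminus_R3 by simp
qed

lemma cont_bdd:
  fixes f :: "R3 \<Rightarrow> real"
  assumes "continuous_on UNIV f" "bounded {x. f x \<noteq> 0}"
  shows "\<exists>C. \<forall>x. \<bar>f x\<bar> \<le> C"
proof -
  obtain R where "\<forall>x\<in>{x. f x \<noteq> 0}. norm x \<le> R" using assms(2) unfolding bounded_pos by blast
  then have R: "{x. f x \<noteq> 0} \<subseteq> cball 0 R" by (auto simp: mem_cball_0)
  have "compact (f ` cball 0 R)"
    by (rule compact_continuous_image) (auto intro: continuous_on_subset[OF assms(1)])
  then have "bounded (f ` cball 0 R)" by (rule compact_imp_bounded)
  then obtain B where B: "\<And>y. y \<in> f ` cball 0 R \<Longrightarrow> norm y \<le> B"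
    unfolding bounded_iff by metis
  have "\<bar>f x\<bar> \<le> max B 0" for x
  proof (cases "f x = 0")
    case False then have "x \<in> cball 0 R" using R by auto
    then have "norm (f x) \<le> B" using B by blast
    then show ?thesis by simp
  qed simp
  then show ?thesis by blast
qed
lemma bdd_cball:
  assumes "bounded (S::R3 set)" obtains R where "S \<subseteq> cball 0 R"
proof -
  obtain R where "\<forall>x\<in>S. norm x \<le> R" using assms unfolding bounded_pos by blast
  then have "S \<subseteq> cball 0 R" by (auto simp: mem_cball_0)
  then show ?thesis using that by blast
qed

lemma L2_mult_int:
  fixes u \<psi> :: "R3 \<Rightarrow> real"
  assumes um: "u \<in> borel_measurable lborel" and u2: "integrable lborel (\<lambda>x. (u x)\<^sup>2)"
    and pc: "continuous_on UNIV \<psi>" and pb: "bounded {x. \<psi> x \<noteq> 0}"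
  shows "integrable lborel (\<lambda>x. u x * \<psi> x)"
proof -
  obtain R where R: "{x. \<psi> x \<noteq> 0} \<subseteq> cball 0 R" using bdd_cball[OF pb] .
  obtain C where C: "\<forall>x. \<bar>\<psi> x\<bar> \<le> C" using cont_bdd[OF pc pb] by blast
  have i1: "integrable lborel (\<lambda>x. indicator (cball (0::R3) R) x *\<^sub>R (C\<^sup>2))"
    by (rule borel_integrable_compact) auto
  have i2: "integrable lborel (\<lambda>x. (u x)\<^sup>2 + indicator (cball (0::R3) R) x *\<^sub>R (C\<^sup>2))"
    by (rule Bochner_Integration.integrable_add[OF u2 i1])
  have pm: "\<psi> \<in> borel_measurable lborel"
    using borel_measurable_continuous_onI[OF pc] by simp
  show ?thesis
  proof (rule Bochner_Integration.integrable_bound[OF i2])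
    show "(\<lambda>x. u x * \<psi> x) \<in> borel_measurable lborel" using um pm by (rule borel_measurable_times)
    show "AE x in lborel. norm (u x * \<psi> x) \<le> norm ((u x)\<^sup>2 + indicator (cball (0::R3) R) x *\<^sub>R (C\<^sup>2))"
    proof (intro AE_I2)
      fix x
      have a: "\<bar>u x * \<psi> x\<bar> \<le> (u x)\<^sup>2 + (\<psi> x)\<^sup>2"
      proof -
        have "0 \<le> (\<bar>u x\<bar> - \<bar>\<psi> x\<bar>)\<^sup>2" by simp
        then have "\<bar>\<psi> x\<bar> * (\<bar>u x\<bar> * 2) \<le> \<psi> x * \<psi> x + u x * u x"
          by (simp add: power2_eq_square abs_mult algebra_simps)
        moreover have "0 \<le> \<bar>\<psi> x\<bar> * \<bar>u x\<bar>" by simp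
        ultimately have "\<bar>\<psi> x\<bar> * \<bar>u x\<bar> \<le> \<psi> x * \<psi> x + u x * u x" by linarith
        then show ?thesis by (simp add: power2_eq_square abs_mult algebra_simps)
      qed
      have b: "(\<psi> x)\<^sup>2 \<le> indicator (cball (0::R3) R) x * C\<^sup>2"
      proof (cases "\<psi> x = 0")
        case True then show ?thesis by (simp add: indicator_def)
        next
        case False then have "x \<in> cball 0 R" using R by auto
        moreover have "\<bar>\<psi> x\<bar>\<^sup>2 \<le> C\<^sup>2" by (rule power_mono) (use C in auto)
        then have "(\<psi> x)\<^sup>2 \<le> C\<^sup>2" by simp
        ultimately show ?thesis by simp
      qed
      show "norm (u x * \<psi> x) \<le> norm ((u x)\<^sup>2 + indicator (cball (0::R3) R) x *\<^sub>R (C\<^sup>2))"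
        using a b by (simp add: indicator_def split: if_splits)
    qed
  qed
qed

lemma wg_trans:
  assumes wg: "weak_grad u g" and um[measurable]: "u \<in> borel_measurable lborel"
  shows "weak_grad (\<lambda>x. u (x - a)) (\<lambda>x. g (x - a))"
  unfolding weak_grad_def
proof (rule conjI; intro allI impI)
  fix i
  have [measurable]: "(\<lambda>x. g x $ i) \<in> borel_measurable lborel" using wg unfolding weak_grad_def by blast
  show "(\<lambda>x. g (x - a) $ i) \<in> borel_measurable lborel" by measurable
next
  fix \<phi> :: "R3 \<Rightarrow> real" and \<phi>' i
  assume A: "bounded {x. \<phi> x \<noteq> 0} \<and> (\<forall>x. (\<phi> has_derivative \<phi>' x) (at x)) \<and>
           (\<forall>i. continuous_on UNIV (\<lambda>x. \<phi>' x (axis i 1)))"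
  define \<phi>2 where "\<phi>2 = (\<lambda>z. \<phi> (z + a))"
  define \<phi>2' where "\<phi>2' = (\<lambda>z. \<phi>' (z + a))"
  have "{x. \<phi>2 x \<noteq> 0} = (\<lambda>x. - a + x) ` {x. \<phi> x \<noteq> 0}"
    unfolding \<phi>2_def by (auto simp: image_iff intro!: exI[of _ "_ + a"])
  then have b2: "bounded {x. \<phi>2 x \<noteq> 0}" using A bounded_translation by metis
  have d2: "\<forall>x. (\<phi>2 has_derivative \<phi>2' x) (at x)"
  proof
    fix x
    have "((\<lambda>z. z + a) has_derivative (\<lambda>h. h)) (at x)" by (auto intro!: derivative_eq_intros)
    from has_derivative_compose[OF this] A show "(\<phi>2 has_derivative \<phi>2' x) (at x)"
      unfolding \<phi>2_def \<phi>2'_def by blast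
  qed
  have c2: "\<forall>i. continuous_on UNIV (\<lambda>x. \<phi>2' x (axis i 1))"
  proof
    fix i
    have "continuous_on UNIV ((\<lambda>x. \<phi>' x (axis i 1)) \<circ> (\<lambda>z. z + a))"
      by (rule continuous_on_compose) (use A in \<open>auto intro!: continuous_intros elim: continuous_on_subset\<close>)
    then show "continuous_on UNIV (\<lambda>x. \<phi>2' x (axis i 1))" unfolding \<phi>2'_def o_def .
  qed
  have W: "integrable lborel (\<lambda>x. u x * \<phi>2' x (axis i 1)) \<and>
             integrable lborel (\<lambda>x. g x $ i * \<phi>2 x) \<and>
             (\<integral>x. u x * \<phi>2' x (axis i 1) \<partial>lborel) = - (\<integral>x. g x $ i * \<phi>2 x \<partial>lborel)"
    using wg b2 d2 c2 unfolding weak_grad_def by blast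
  have [measurable]: "(\<lambda>x. g x $ i) \<in> borel_measurable lborel" using wg unfolding weak_grad_def by blast
  have pc: "continuous_on UNIV \<phi>"
    using A by (meson continuous_at_imp_continuous_on has_derivative_continuous)
  have [measurable]: "\<phi>2 \<in> borel_measurable lborel"
    using borel_measurable_continuous_onI[OF continuous_on_compose[OF continuous_on_add[OF continuous_on_id continuous_on_const] continuous_on_subset[OF pc]]]
    unfolding \<phi>2_def o_def by simp
  have [measurable]: "(\<lambda>x. \<phi>2' x (axis i 1)) \<in> borel_measurable lborel"
    using borel_measurable_continuous_onI[OF c2[rule_format]] by simp
  have e1: "(\<lambda>x. u (x - a) * \<phi>' x (axis i 1)) = (\<lambda>x. (\<lambda>z. u z * \<phi>2' z (axis i 1)) (x - a))"
    unfolding \<phi>2'_def by simp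
  have e2: "(\<lambda>x. g (x - a) $ i * \<phi> x) = (\<lambda>x. (\<lambda>z. g z $ i * \<phi>2 z) (x - a))"
    unfolding \<phi>2_def by simp
  have m1: "(\<lambda>z. u z * \<phi>2' z (axis i 1)) \<in> borel_measurable lborel" by measurable
  have m2: "(\<lambda>z. g z $ i * \<phi>2 z) \<in> borel_measurable lborel" by measurable
  show "integrable lborel (\<lambda>x. u (x - a) * \<phi>' x (axis i 1)) \<and>
        integrable lborel (\<lambda>x. g (x - a) $ i * \<phi> x) \<and>
        (\<integral>x. u (x - a) * \<phi>' x (axis i 1) \<partial>lborel) = - (\<integral>x. g (x - a) $ i * \<phi> x \<partial>lborel)"
    unfolding e1 e2 lb_trans[OF m1] lb_trans[OF m2] using W by blast
qed

lemma comp_L2: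
  assumes wg: "weak_grad u g" and g2: "integrable lborel (\<lambda>x. (norm (g x))\<^sup>2)"
  shows "integrable lborel (\<lambda>x. (g x $ i)\<^sup>2)"
proof (rule Bochner_Integration.integrable_bound[OF g2])
  have [measurable]: "(\<lambda>x. g x $ i) \<in> borel_measurable lborel" using wg unfolding weak_grad_def by blast
  show "(\<lambda>x. (g x $ i)\<^sup>2) \<in> borel_measurable lborel" by measurable
  show "AE x in lborel. norm ((g x $ i)\<^sup>2) \<le> norm ((norm (g x))\<^sup>2)"
  proof (rule AE_I2)
    fix x
    have "\<bar>g x $ i\<bar>\<^sup>2 \<le> (norm (g x))\<^sup>2" by (rule power_mono) (auto simp: component_le_norm_cart)
    then show "norm ((g x $ i)\<^sup>2) \<le> norm ((norm (g x))\<^sup>2)" by simp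
  qed
qed

lemma wg_mult:
  assumes wg: "weak_grad u g" and um[measurable]: "u \<in> borel_measurable lborel"
    and u2: "integrable lborel (\<lambda>x. (u x)\<^sup>2)"
    and g2: "integrable lborel (\<lambda>x. (norm (g x))\<^sup>2)"
    and hd: "\<And>x. (h has_derivative h' x) (at x)"
    and hc: "\<And>i. continuous_on UNIV (\<lambda>x. h' x (axis i 1))"
  shows "weak_grad (\<lambda>x. h x * u x) (\<lambda>x. h x *\<^sub>R g x + u x *\<^sub>R (\<chi> i. h' x (axis i 1)))"
  unfolding weak_grad_def
proof (rule conjI; intro allI impI)
  have hcont: "continuous_on UNIV h"
    using hd by (meson continuous_at_imp_continuous_on has_derivative_continuous)
  have [measurable]: "h \<in> borel_measurable lborel"
    using borel_measurable_continuous_onI[OF hcont] by simp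
  fix i
  have [measurable]: "(\<lambda>x. g x $ i) \<in> borel_measurable lborel" using wg unfolding weak_grad_def by blast
  have [measurable]: "(\<lambda>x. h' x (axis i 1)) \<in> borel_measurable lborel"
    using borel_measurable_continuous_onI[OF hc] by simp
  show "(\<lambda>x. (h x *\<^sub>R g x + u x *\<^sub>R (\<chi> i. h' x (axis i 1))) $ i) \<in> borel_measurable lborel"
    by simp measurable
next
  have hcont: "continuous_on UNIV h"
    using hd by (meson continuous_at_imp_continuous_on has_derivative_continuous)
  have [measurable]: "h \<in> borel_measurable lborel"
    using borel_measurable_continuous_onI[OF hcont] by simp
  fix \<phi> :: "R3 \<Rightarrow> real" and \<phi>' i
  assume A: "bounded {x. \<phi> x \<noteq> 0} \<and> (\<forall>x. (\<phi> has_derivative \<phi>' x) (at x)) \<and>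
           (\<forall>i. continuous_on UNIV (\<lambda>x. \<phi>' x (axis i 1)))"
  have pc: "continuous_on UNIV \<phi>"
    using A by (meson continuous_at_imp_continuous_on has_derivative_continuous)
  define \<psi> where "\<psi> = (\<lambda>x. h x * \<phi> x)"
  define \<psi>' where "\<psi>' = (\<lambda>x v. h x * \<phi>' x v + h' x v * \<phi> x)"
  have b2: "bounded {x. \<psi> x \<noteq> 0}"
    by (rule bounded_subset[of "{x. \<phi> x \<noteq> 0}"]) (use A in \<open>auto simp: \<psi>_def\<close>)
  have d2: "\<forall>x. (\<psi> has_derivative \<psi>' x) (at x)"
    unfolding \<psi>_def \<psi>'_def using A hd by (auto intro!: has_derivative_mult)
  have c2: "\<forall>i. continuous_on UNIV (\<lambda>x. \<psi>' x (axis i 1))"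
    unfolding \<psi>'_def using A hc pc hcont by (auto intro!: continuous_intros)
  have W: "integrable lborel (\<lambda>x. u x * \<psi>' x (axis i 1)) \<and>
             integrable lborel (\<lambda>x. g x $ i * \<psi> x) \<and>
             (\<integral>x. u x * \<psi>' x (axis i 1) \<partial>lborel) = - (\<integral>x. g x $ i * \<psi> x \<partial>lborel)"
    using wg b2 d2 c2 unfolding weak_grad_def by blast
  have I1: "integrable lborel (\<lambda>x. u x * (h' x (axis i 1) * \<phi> x))"
  proof (rule L2_mult_int[OF um u2])
    show "continuous_on UNIV (\<lambda>x. h' x (axis i 1) * \<phi> x)" using hc pc by (auto intro!: continuous_intros)
    show "bounded {x. h' x (axis i 1) * \<phi> x \<noteq> 0}"
      by (rule bounded_subset[of "{x. \<phi> x \<noteq> 0}"]) (use A in auto)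
  qed
  have e1: "(\<lambda>x. h x * u x * \<phi>' x (axis i 1)) = (\<lambda>x. u x * \<psi>' x (axis i 1) - u x * (h' x (axis i 1) * \<phi> x))"
    unfolding \<psi>'_def by (auto simp: algebra_simps)
  have e2: "(\<lambda>x. (h x *\<^sub>R g x + u x *\<^sub>R (\<chi> i. h' x (axis i 1))) $ i * \<phi> x) =
      (\<lambda>x. g x $ i * \<psi> x + u x * (h' x (axis i 1) * \<phi> x))"
    unfolding \<psi>_def by (auto simp: algebra_simps)
  show "integrable lborel (\<lambda>x. h x * u x * \<phi>' x (axis i 1)) \<and>
        integrable lborel (\<lambda>x. (h x *\<^sub>R g x + u x *\<^sub>R (\<chi> i. h' x (axis i 1))) $ i * \<phi> x) \<and>
        (\<integral>x. h x * u x * \<phi>' x (axis i 1) \<partial>lborel) =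
          - (\<integral>x. (h x *\<^sub>R g x + u x *\<^sub>R (\<chi> i. h' x (axis i 1))) $ i * \<phi> x \<partial>lborel)"
    unfolding e1 e2 using W I1
    by (simp add: Bochner_Integration.integral_diff Bochner_Integration.integral_add)
qed

lemma R3_meas:
  fixes G :: "'a \<Rightarrow> R3"
  assumes "\<And>i. (\<lambda>x. G x $ i) \<in> borel_measurable M"
  shows "G \<in> borel_measurable M"
  by (subst borel_measurable_euclidean_space) (auto simp: Basis_vec_def inner_axis assms)

lemma norm_chi_bound:
  fixes d :: "3 \<Rightarrow> real"
  assumes "\<And>i. \<bar>d i\<bar> \<le> C"
  shows "norm (\<chi> i. d i) \<le> 3 * C"
proof -
  have "norm (\<chi> i. d i) \<le> (\<Sum>i\<in>UNIV. \<bar>(\<chi> i. d i) $ i\<bar>)" by (rule norm_le_l1_cart)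
  also have "\<dots> \<le> of_nat (card (UNIV :: 3 set)) * C" by (rule sum_bounded_above) (simp add: assms)
  finally show ?thesis by simp
qed

lemma H1_mult:
  assumes wg: "weak_grad u g" and um[measurable]: "u \<in> borel_measurable lborel"
    and u2: "integrable lborel (\<lambda>x. (u x)\<^sup>2)"
    and g2: "integrable lborel (\<lambda>x. (norm (g x))\<^sup>2)"
    and hd: "\<And>x. (h has_derivative h' x) (at x)"
    and hc: "\<And>i. continuous_on UNIV (\<lambda>x. h' x (axis i 1))"
    and hb: "\<And>x. \<bar>h x\<bar> \<le> C" and hb': "\<And>x i. \<bar>h' x (axis i 1)\<bar> \<le> C'"
  shows "(\<lambda>x. h x * u x) \<in> H1"
proof -
  have hcont: "continuous_on UNIV h"
    using hd by (meson continuous_at_imp_continuous_on has_derivative_continuous)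
  have [measurable]: "h \<in> borel_measurable lborel"
    using borel_measurable_continuous_onI[OF hcont] by simp
  have [measurable]: "(\<lambda>x. g x $ i) \<in> borel_measurable lborel" for i using wg unfolding weak_grad_def by blast
  have [measurable]: "(\<lambda>x. h' x (axis i 1)) \<in> borel_measurable lborel" for i
    using borel_measurable_continuous_onI[OF hc] by simp
  have gm[measurable]: "g \<in> borel_measurable lborel" by (rule R3_meas) measurable
  define G where "G = (\<lambda>x. h x *\<^sub>R g x + u x *\<^sub>R (\<chi> i. h' x (axis i 1)))"
  have Gm[measurable]: "G \<in> borel_measurable lborel" unfolding G_def by (rule R3_meas) (simp, measurable)
  have WG: "weak_grad (\<lambda>x. h x * u x) G" unfolding G_def by (rule wg_mult[OF wg um u2 g2 hd hc])
  have C0: "0 \<le> C" using hb[of 0] by linarith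
  have C'0: "0 \<le> C'" using hb'[of 0 0] by linarith
  have i1: "integrable lborel (\<lambda>x. C\<^sup>2 * (u x)\<^sup>2)" using u2 by simp
  have hu2: "integrable lborel (\<lambda>x. (h x * u x)\<^sup>2)"
  proof (rule Bochner_Integration.integrable_bound[OF i1])
    show "(\<lambda>x. (h x * u x)\<^sup>2) \<in> borel_measurable lborel" by measurable
    show "AE x in lborel. norm ((h x * u x)\<^sup>2) \<le> norm (C\<^sup>2 * (u x)\<^sup>2)"
    proof (rule AE_I2)
      fix x
      have "\<bar>h x\<bar>\<^sup>2 \<le> C\<^sup>2" by (rule power_mono) (auto simp: hb)
      then show "norm ((h x * u x)\<^sup>2) \<le> norm (C\<^sup>2 * (u x)\<^sup>2)"
        by (simp add: power_mult_distrib mult_right_mono)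
    qed
  qed
  have i2: "integrable lborel (\<lambda>x. 2 * C\<^sup>2 * (norm (g x))\<^sup>2 + 2 * (3 * C')\<^sup>2 * (u x)\<^sup>2)"
    using g2 u2 by simp
  have G2: "integrable lborel (\<lambda>x. (norm (G x))\<^sup>2)"
  proof (rule Bochner_Integration.integrable_bound[OF i2])
    show "(\<lambda>x. (norm (G x))\<^sup>2) \<in> borel_measurable lborel" by measurable
    show "AE x in lborel. norm ((norm (G x))\<^sup>2) \<le> norm (2 * C\<^sup>2 * (norm (g x))\<^sup>2 + 2 * (3 * C')\<^sup>2 * (u x)\<^sup>2)"
    proof (rule AE_I2)
      fix x
      have nd: "norm (\<chi> i. h' x (axis i 1)) \<le> 3 * C'" by (rule norm_chi_bound) (rule hb')
      have "norm (G x) \<le> \<bar>h x\<bar> * norm (g x) + \<bar>u x\<bar> * norm (\<chi> i. h' x (axis i 1))"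
        unfolding G_def by (rule order_trans[OF norm_triangle_ineq]) simp
      also have "\<dots> \<le> C * norm (g x) + \<bar>u x\<bar> * (3 * C')"
        by (intro add_mono mult_mono) (auto simp: hb nd C0)
      finally have a: "norm (G x) \<le> C * norm (g x) + \<bar>u x\<bar> * (3 * C')" .
      have "(norm (G x))\<^sup>2 \<le> (C * norm (g x) + \<bar>u x\<bar> * (3 * C'))\<^sup>2"
        by (rule power_mono[OF a]) simp
      also have "\<dots> \<le> 2 * C\<^sup>2 * (norm (g x))\<^sup>2 + 2 * (3 * C')\<^sup>2 * (u x)\<^sup>2"
      proof -
        have "0 \<le> (C * norm (g x) - \<bar>u x\<bar> * (3 * C'))\<^sup>2" by simp
        then show ?thesis by (simp add: power2_eq_square algebra_simps)
      qed
      finally show "norm ((norm (G x))\<^sup>2) \<le> norm (2 * C\<^sup>2 * (norm (g x))\<^sup>2 + 2 * (3 * C')\<^sup>2 * (u x)\<^sup>2)"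
        using C0 C'0 by simp
    qed
  qed
  show ?thesis unfolding H1_def using hu2 WG G2 by auto
qed

locale etactx =
  fixes \<eta> :: "real \<Rightarrow> real" and T :: real
  assumes Tpos: "0 < T"
    and ed: "\<And>t. t > 0 \<Longrightarrow> \<eta> differentiable (at t)"
    and ed1: "\<And>t. t > 0 \<Longrightarrow> deriv \<eta> differentiable (at t)"
    and e1: "\<And>t. 0 \<le> t \<Longrightarrow> t \<le> T / 2 \<Longrightarrow> \<eta> t = 1"
    and e0: "\<And>t. t \<ge> T \<Longrightarrow> \<eta> t = 0"
    and erange: "\<And>t. 0 \<le> t \<Longrightarrow> 0 \<le> \<eta> t \<and> \<eta> t \<le> 1"
begin

definition H :: "R3 \<Rightarrow> real" where "H w = \<eta> (norm w)"
definition H' :: "R3 \<Rightarrow> R3 \<Rightarrow> real" where "H' w v = deriv \<eta> (norm w) * (w \<bullet> v) / norm w"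

lemma deriv_small: "0 < s \<Longrightarrow> s < T / 2 \<Longrightarrow> deriv \<eta> s = 0"
proof -
  assume s: "0 < s" "s < T / 2"
  have "((\<lambda>_. 1::real) has_field_derivative 0) (at s)" by simp
  then have "(\<eta> has_field_derivative 0) (at s)"
    by (rule has_field_derivative_transform_within_open[where S="{0<..<T/2}"]) (use s e1 in auto)
  then show ?thesis by (rule DERIV_imp_deriv)
qed

lemma deriv_large: "T < s \<Longrightarrow> deriv \<eta> s = 0"
proof -
  assume s: "T < s"
  have "((\<lambda>_. 0::real) has_field_derivative 0) (at s)" by simp
  then have "(\<eta> has_field_derivative 0) (at s)"
    by (rule has_field_derivative_transform_within_open[where S="{T<..}"]) (use s e0 in auto)
  then show ?thesis by (rule DERIV_imp_deriv)
qed

lemma H_deriv: "(H has_derivative H' w) (at w)"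
proof (cases "w = 0")
  case True
  have "((\<lambda>_. 1::real) has_derivative (\<lambda>v. 0)) (at w)" by simp
  then have "(H has_derivative (\<lambda>v. 0)) (at w)"
    by (rule has_derivative_transform_within_open[where s="ball 0 (T/2)"]) (use True Tpos e1 in \<open>auto simp: H_def\<close>)
  moreover have "H' w = (\<lambda>v. 0)" using True by (auto simp: H'_def)
  ultimately show ?thesis by simp
next
  case False
  have n: "(norm has_derivative (\<lambda>h. h \<bullet> sgn w)) (at w)"
    using has_derivative_norm[OF False] .
  have "(\<eta> has_field_derivative deriv \<eta> (norm w)) (at (norm w))"
    using ed[of "norm w"] False DERIV_deriv_iff_real_differentiable by auto
  then have e: "(\<eta> has_derivative (\<lambda>h. deriv \<eta> (norm w) * h)) (at (norm w))"
    by (simp add: has_field_derivative_def)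
  have "((\<lambda>x. \<eta> (norm x)) has_derivative (\<lambda>h. deriv \<eta> (norm w) * (h \<bullet> sgn w))) (at w)"
    by (rule has_derivative_compose[OF n e])
  moreover have "H = (\<lambda>x. \<eta> (norm x))" by (rule ext) (simp add: H_def)
  moreover have "H' w = (\<lambda>h. deriv \<eta> (norm w) * (h \<bullet> sgn w))"
    by (auto simp: H'_def sgn_div_norm inner_commute fun_eq_iff divide_inverse)
  ultimately show ?thesis by simp
qed

lemma H'_zero_near0: "norm w < T / 2 \<Longrightarrow> H' w v = 0"
  by (cases "w = 0") (auto simp: H'_def deriv_small)

lemma H'_zero_far: "norm w > T \<Longrightarrow> H' w v = 0"
  by (auto simp: H'_def deriv_large)

lemma H'_cont: "continuous_on UNIV (\<lambda>w. H' w v)"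
proof (rule continuous_at_imp_continuous_on, intro ballI)
  fix w :: R3
  show "isCont (\<lambda>w. H' w v) w"
  proof (cases "w = 0")
    case True
    have "isCont (\<lambda>_. 0::real) w" by simp
    then show ?thesis
      by (rule continuous_transform_within[where \<delta>="T/2"]) (use True Tpos in \<open>auto simp: H'_zero_near0 dist_norm\<close>)
  next
    case False
    have c1: "isCont (deriv \<eta>) (norm w)"
      using ed1[of "norm w"] False differentiable_imp_continuous_within by auto
    have c0: "isCont (\<lambda>x. norm x) w" by (intro continuous_intros)
    have c2: "isCont (\<lambda>w. deriv \<eta> (norm w)) w"
      by (rule isCont_o2[OF c0 c1])
    show ?thesis unfolding H'_def using False
      by (intro continuous_intros c2) auto
  qed
qed

lemma H'_bound: "\<exists>C. \<forall>w i. \<bar>H' w (axis i 1)\<bar> \<le> C"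
proof -
  have "\<forall>i. \<exists>C. \<forall>w. \<bar>H' w (axis i 1)\<bar> \<le> C"
  proof
    fix i :: 3
    have b: "bounded {w. H' w (axis i 1) \<noteq> 0}"
    proof (rule bounded_subset[of "cball 0 T"])
      show "{w. H' w (axis i 1) \<noteq> 0} \<subseteq> cball 0 T"
      proof
        fix w assume "w \<in> {w. H' w (axis i 1) \<noteq> 0}"
        then show "w \<in> cball 0 T" using H'_zero_far[of w] by (force simp: mem_cball_0)
      qed
    qed simp
    show "\<exists>C. \<forall>w. \<bar>H' w (axis i 1)\<bar> \<le> C" by (rule cont_bdd[OF H'_cont b])
  qed
  then obtain Cf where Cf: "\<And>w i. \<bar>H' w (axis i 1)\<bar> \<le> Cf i" by metis
  have "\<bar>H' w (axis i 1)\<bar> \<le> (\<Sum>j\<in>UNIV. Cf j)" for w i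
  proof -
    have "Cf i \<le> (\<Sum>j\<in>UNIV. Cf j)"
      by (rule member_le_sum) (auto intro: order_trans[OF abs_ge_zero Cf])
    then show ?thesis using Cf[of w i] by linarith
  qed
  then show ?thesis by blast
qed

lemma H'_scale: "H' w (c *\<^sub>R v) = c * H' w v"
  by (simp add: H'_def)

lemma H_bound: "\<bar>H w\<bar> \<le> 1"
  using erange[of "norm w"] by (simp add: H_def)

lemma h_props:
  fixes t \<epsilon> :: real and y :: R3
  defines "h \<equiv> (\<lambda>x. t * H (\<epsilon> *\<^sub>R x - y))"
  defines "h' \<equiv> (\<lambda>x v. t * H' (\<epsilon> *\<^sub>R x - y) (\<epsilon> *\<^sub>R v))"
  shows "\<And>x. (h has_derivative h' x) (at x)"
    and "\<And>i. continuous_on UNIV (\<lambda>x. h' x (axis i 1))"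
    and "\<And>x. \<bar>h x\<bar> \<le> \<bar>t\<bar>"
    and "\<exists>C'. \<forall>x i. \<bar>h' x (axis i 1)\<bar> \<le> C'"
proof -
  fix x
  have a: "((\<lambda>x. \<epsilon> *\<^sub>R x - y) has_derivative (\<lambda>v. \<epsilon> *\<^sub>R v)) (at x)"
    by (auto intro!: derivative_eq_intros)
  have "((\<lambda>x. H (\<epsilon> *\<^sub>R x - y)) has_derivative (\<lambda>v. H' (\<epsilon> *\<^sub>R x - y) (\<epsilon> *\<^sub>R v))) (at x)"
    by (rule has_derivative_compose[OF a H_deriv])
  then show "(h has_derivative h' x) (at x)" unfolding h_def h'_def
    by (rule has_derivative_mult_right)
next
  fix i
  have "continuous_on UNIV (\<lambda>x. t * (\<epsilon> * H' (\<epsilon> *\<^sub>R x - y) (axis i 1)))"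
    by (intro continuous_intros continuous_on_compose2[OF H'_cont]) auto
  then show "continuous_on UNIV (\<lambda>x. h' x (axis i 1))" unfolding h'_def H'_scale .
next
  fix x
  show "\<bar>h x\<bar> \<le> \<bar>t\<bar>" unfolding h_def using H_bound[of "\<epsilon> *\<^sub>R x - y"]
    by (simp add: abs_mult mult_left_le)
next
  obtain C where C: "\<And>w i. \<bar>H' w (axis i 1)\<bar> \<le> C" using H'_bound by blast
  have "\<bar>h' x (axis i 1)\<bar> \<le> \<bar>t\<bar> * \<bar>\<epsilon>\<bar> * C" for x i
    unfolding h'_def H'_scale abs_mult mult.assoc
    by (intro mult_left_mono C) auto
  then show "\<exists>C'. \<forall>x i. \<bar>h' x (axis i 1)\<bar> \<le> C'" by blast
qed

end

lemma H1_trans: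
  assumes "uu \<in> H1"
  obtains g where "weak_grad (\<lambda>x. uu (x - a)) g" "(\<lambda>x. uu (x - a)) \<in> borel_measurable lborel"
    "integrable lborel (\<lambda>x. (uu (x - a))\<^sup>2)" "integrable lborel (\<lambda>x. (norm (g x))\<^sup>2)"
proof -
  obtain g where um[measurable]: "uu \<in> borel_measurable lborel" and u2: "integrable lborel (\<lambda>x. (uu x)\<^sup>2)"
    and wg: "weak_grad uu g" and g2: "integrable lborel (\<lambda>x. (norm (g x))\<^sup>2)"
    using assms unfolding H1_def by blast
  have [measurable]: "(\<lambda>x. g x $ i) \<in> borel_measurable lborel" for i using wg unfolding weak_grad_def by blast
  have gm[measurable]: "g \<in> borel_measurable lborel" by (rule R3_meas) measurable
  have m1: "(\<lambda>x. (uu x)\<^sup>2) \<in> borel_measurable lborel" by measurable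
  have m2: "(\<lambda>x. (norm (g x))\<^sup>2) \<in> borel_measurable lborel" by measurable
  show ?thesis
  proof (rule that[of "\<lambda>x. g (x - a)"])
    show "weak_grad (\<lambda>x. uu (x - a)) (\<lambda>x. g (x - a))" by (rule wg_trans[OF wg um])
    show "(\<lambda>x. uu (x - a)) \<in> borel_measurable lborel" by measurable
    show "integrable lborel (\<lambda>x. (uu (x - a))\<^sup>2)" using lb_trans(1)[OF m1] u2 by simp
    show "integrable lborel (\<lambda>x. (norm (g (x - a)))\<^sup>2)" using lb_trans(1)[OF m2] g2 by simp
  qed
qed

lemma K_props:
  fixes r :: real
  assumes "0 \<le> r"
  shows "0 \<le> (1 - exp (- r)) / r" "(1 - exp (- r)) / r \<le> 1" "0 < r \<Longrightarrow> 0 < (1 - exp (- r)) / r"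
proof -
  have a: "1 - r \<le> exp (- r)" using exp_ge_add_one_self[of "- r"] by simp
  have b: "exp (- r) \<le> 1" using assms by simp
  show "0 \<le> (1 - exp (- r)) / r" using b assms by simp
  show "(1 - exp (- r)) / r \<le> 1"
  proof (cases "r = 0")
    case False then show ?thesis using a assms by (simp add: divide_le_eq)
  qed simp
  show "0 < (1 - exp (- r)) / r" if "0 < r" using that by simp
qed

lemma phi_pos:
  fixes w :: "R3 \<Rightarrow> real"
  assumes wm[measurable]: "w \<in> borel_measurable lborel" and w2: "integrable lborel (\<lambda>x. (w x)\<^sup>2)"
    and nz: "\<not> (AE x in lborel. w x = 0)"
  shows "(\<integral>x. phi_pot w x * (w x)\<^sup>2 \<partial>lborel) > 0"
proof -
  define K where "K = (\<lambda>x y::R3. (1 - exp (- dist x y)) / dist x y)"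
  have K0: "0 \<le> K x y" and K1: "K x y \<le> 1" for x y
    using K_props[of "dist x y"] by (auto simp: K_def)
  have Kp: "x \<noteq> y \<Longrightarrow> 0 < K x y" for x y
    using K_props(3)[of "dist x y"] by (auto simp: K_def)
  have ph: "phi_pot w x = (\<integral>y. K x y * (w y)\<^sup>2 \<partial>lborel)" for x
    by (simp add: phi_pot_def K_def)
  have Km[measurable]: "(\<lambda>p. K (fst p) (snd p)) \<in> borel_measurable (lborel \<Otimes>\<^sub>M lborel)"
    unfolding K_def by measurable
  have int1: "integrable lborel (\<lambda>y. K x y * (w y)\<^sup>2)" for x
  proof (rule Bochner_Integration.integrable_bound[OF w2])
    have "(\<lambda>y. K x y) \<in> borel_measurable lborel" unfolding K_def by measurable
    then show "(\<lambda>y. K x y * (w y)\<^sup>2) \<in> borel_measurable lborel" by measurable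
    show "AE y in lborel. norm (K x y * (w y)\<^sup>2) \<le> norm ((w y)\<^sup>2)"
      using K0 K1 by (auto intro!: AE_I2 simp: abs_mult mult_left_le_one_le)
  qed
  have phpos: "phi_pot w x > 0" for x
  proof -
    have nn: "AE y in lborel. 0 \<le> K x y * (w y)\<^sup>2" using K0 by auto
    have ge: "phi_pot w x \<ge> 0" unfolding ph by (rule integral_nonneg_AE[OF nn])
    have "phi_pot w x \<noteq> 0"
    proof
      assume "phi_pot w x = 0"
      then have "AE y in lborel. K x y * (w y)\<^sup>2 = 0"
        unfolding ph using integral_nonneg_eq_0_iff_AE[OF int1 nn] by simp
      moreover have "AE y in lborel. y \<noteq> x" by (rule AE_lborel_singleton)
      ultimately have "AE y in lborel. w y = 0"
      proof eventually_elim
        case (elim y)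
        then have "K x y \<noteq> 0" using Kp[of x y] by auto
        with elim show ?case by simp
      qed
      then show False using nz by simp
    qed
    then show ?thesis using ge by simp
  qed
  have phm[measurable]: "(\<lambda>x. phi_pot w x) \<in> borel_measurable lborel"
    unfolding ph
    by (rule lborel.borel_measurable_lebesgue_integral) measurable
  have phb: "phi_pot w x \<le> (\<integral>y. (w y)\<^sup>2 \<partial>lborel)" for x
    unfolding ph by (rule integral_mono[OF int1 w2]) (use K0 K1 in \<open>auto simp: mult_left_le_one_le\<close>)
  have int2: "integrable lborel (\<lambda>x. phi_pot w x * (w x)\<^sup>2)"
  proof (rule Bochner_Integration.integrable_bound)
    show "integrable lborel (\<lambda>x. (\<integral>y. (w y)\<^sup>2 \<partial>lborel) * (w x)\<^sup>2)" using w2 by simp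
    show "(\<lambda>x. phi_pot w x * (w x)\<^sup>2) \<in> borel_measurable lborel" by measurable
    show "AE x in lborel. norm (phi_pot w x * (w x)\<^sup>2) \<le> norm ((\<integral>y. (w y)\<^sup>2 \<partial>lborel) * (w x)\<^sup>2)"
    proof (rule AE_I2)
      fix x
      have "0 \<le> phi_pot w x" using phpos[of x] by simp
      then show "norm (phi_pot w x * (w x)\<^sup>2) \<le> norm ((\<integral>y. (w y)\<^sup>2 \<partial>lborel) * (w x)\<^sup>2)"
        using phb[of x] by (simp add: abs_mult mult_right_mono)
    qed
  qed
  have nn2: "AE x in lborel. 0 \<le> phi_pot w x * (w x)\<^sup>2" by (intro AE_I2 mult_nonneg_nonneg) (auto simp: less_imp_le[OF phpos])
  have ge2: "(\<integral>x. phi_pot w x * (w x)\<^sup>2 \<partial>lborel) \<ge> 0" by (rule integral_nonneg_AE[OF nn2])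
  have "(\<integral>x. phi_pot w x * (w x)\<^sup>2 \<partial>lborel) \<noteq> 0"
  proof
    assume "(\<integral>x. phi_pot w x * (w x)\<^sup>2 \<partial>lborel) = 0"
    then have "AE x in lborel. phi_pot w x * (w x)\<^sup>2 = 0"
      using integral_nonneg_eq_0_iff_AE[OF int2 nn2] by simp
    then have "AE x in lborel. w x = 0"
    proof eventually_elim
      case (elim x)
      then have "phi_pot w x \<noteq> 0" using phpos[of x] by auto
      with elim show ?case by simp
    qed
    then show False using nz by simp
  qed
  then show ?thesis using ge2 by simp
qed

context etactx begin

lemma H_cont: "continuous_on UNIV H"
  using H_deriv by (meson continuous_at_imp_continuous_on has_derivative_continuous)

lemma H_meas[measurable]: "H \<in> borel_measurable borel"
  using borel_measurable_continuous_onI[OF H_cont] .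

lemma H_supp: "H w \<noteq> 0 \<Longrightarrow> norm w < T"
  using e0[of "norm w"] by (force simp: H_def)

lemma Psi_eq: "\<epsilon> \<noteq> 0 \<Longrightarrow> Psi \<eta> uu \<epsilon> y x = H (\<epsilon> *\<^sub>R x - y) * uu (x - (1/\<epsilon>) *\<^sub>R y)"
  by (simp add: Psi_def H_def scaleR_right_diff_distrib)

lemma Psi_shift: "\<epsilon> \<noteq> 0 \<Longrightarrow> Psi \<eta> uu \<epsilon> y ((1/\<epsilon>) *\<^sub>R y + z) = H (\<epsilon> *\<^sub>R z) * uu z"
  by (simp add: Psi_eq scaleR_right_distrib)

lemma claim:
  fixes uu :: "R3 \<Rightarrow> real" and V :: "R3 \<Rightarrow> real" and \<epsilon> R \<rho> V0 :: real and y :: R3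
  assumes uH: "uu \<in> H1" and rad: "\<forall>x y. norm x = norm y \<longrightarrow> uu x = uu y"
    and R: "\<not> (AE z in lborel. norm z \<le> R \<longrightarrow> uu z = 0)"
    and eps: "0 < \<epsilon>" "\<epsilon> * R < T / 2"
    and Vc: "continuous_on UNIV V"
    and My: "V y = V0"
    and Mb: "{x. infdist x {z. V z = V0} \<le> 2 * T} \<subseteq> ball 0 \<rho>"
  shows "beta \<rho> \<epsilon> (Phi V \<eta> uu \<epsilon> y) = y"
proof -
  define a where "a = (1/\<epsilon>) *\<^sub>R y"
  define \<Psi> where "\<Psi> = Psi \<eta> uu \<epsilon> y"
  define w where "w = (\<lambda>z. H (\<epsilon> *\<^sub>R z) * uu z)"
  have e0: "\<epsilon> \<noteq> 0" using eps by simp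
  have Psi_x: "\<Psi> x = H (\<epsilon> *\<^sub>R x - y) * uu (x - a)" for x
    unfolding \<Psi>_def a_def using Psi_eq[OF e0] .
  have Psi_s: "\<Psi> (a + z) = w z" for z
    unfolding \<Psi>_def a_def w_def using Psi_shift[OF e0] .
  have um[measurable]: "uu \<in> borel_measurable lborel" and u2: "integrable lborel (\<lambda>x. (uu x)\<^sup>2)"
    using uH unfolding H1_def by auto
  have wm[measurable]: "w \<in> borel_measurable lborel" unfolding w_def by measurable
  have Psim[measurable]: "\<Psi> \<in> borel_measurable lborel"
    unfolding Psi_x[abs_def] by measurable
  have w2: "integrable lborel (\<lambda>z. (w z)\<^sup>2)"
  proof (rule Bochner_Integration.integrable_bound[OF u2])
    show "(\<lambda>z. (w z)\<^sup>2) \<in> borel_measurable lborel" by measurable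
    show "AE x in lborel. norm ((w x)\<^sup>2) \<le> norm ((uu x)\<^sup>2)"
    proof (rule AE_I2)
      fix x
      have "\<bar>w x\<bar> \<le> \<bar>uu x\<bar>" unfolding w_def abs_mult using H_bound[of "\<epsilon> *\<^sub>R x"]
        by (simp add: mult_left_le_one_le)
      then have "\<bar>w x\<bar>\<^sup>2 \<le> \<bar>uu x\<bar>\<^sup>2" by (rule power_mono) simp
      then show "norm ((w x)\<^sup>2) \<le> norm ((uu x)\<^sup>2)" by simp
    qed
  qed
  have P1: "(\<integral>z. (w z)\<^sup>2 \<partial>lborel) > 0"
  proof -
    have nn: "AE z in lborel. 0 \<le> (w z)\<^sup>2" by simp
    have ge: "(\<integral>z. (w z)\<^sup>2 \<partial>lborel) \<ge> 0" by (rule integral_nonneg_AE[OF nn])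
    have "(\<integral>z. (w z)\<^sup>2 \<partial>lborel) \<noteq> 0"
    proof
      assume "(\<integral>z. (w z)\<^sup>2 \<partial>lborel) = 0"
      then have "AE z in lborel. (w z)\<^sup>2 = 0" using integral_nonneg_eq_0_iff_AE[OF w2 nn] by simp
      then have "AE z in lborel. norm z \<le> R \<longrightarrow> uu z = 0"
      proof eventually_elim
        case (elim z)
        show ?case
        proof
          assume zR: "norm z \<le> R"
          have "\<epsilon> * norm z \<le> \<epsilon> * R" using zR eps by (simp add: mult_left_mono)
          moreover have "norm (\<epsilon> *\<^sub>R z) = \<epsilon> * norm z" using eps by simp
          ultimately have "norm (\<epsilon> *\<^sub>R z) \<le> T / 2" using eps(2) by linarith
          then have "H (\<epsilon> *\<^sub>R z) = 1" unfolding H_def by (intro e1) auto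
          then show "uu z = 0" using elim by (simp add: w_def)
        qed
      qed
      then show False using R by simp
    qed
    then show ?thesis using ge by linarith
  qed
  have P2: "(\<integral>x. (\<Psi> x)\<^sup>2 \<partial>lborel) = (\<integral>z. (w z)\<^sup>2 \<partial>lborel)"
  proof -
    have m: "(\<lambda>x. (\<Psi> x)\<^sup>2) \<in> borel_measurable lborel" by measurable
    show ?thesis using lb_trans_plus(2)[OF m, of a] by (simp add: Psi_s)
  qed
  have P3: "\<not> (AE x in lborel. \<Psi> x = 0)"
  proof
    assume "AE x in lborel. \<Psi> x = 0"
    then have "(\<integral>x. (\<Psi> x)\<^sup>2 \<partial>lborel) = 0" by (intro integral_eq_zero_AE) auto
    then show False using P1 P2 by simp
  qed
  have P4: "(\<lambda>x. t * \<Psi> x) \<in> H1" for t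
  proof -
    obtain g where g: "weak_grad (\<lambda>x. uu (x - a)) g" "(\<lambda>x. uu (x - a)) \<in> borel_measurable lborel"
      "integrable lborel (\<lambda>x. (uu (x - a))\<^sup>2)" "integrable lborel (\<lambda>x. (norm (g x))\<^sup>2)"
      using H1_trans[OF uH, of a] by blast
    obtain C' where C': "\<forall>x i. \<bar>t * H' (\<epsilon> *\<^sub>R x - y) (\<epsilon> *\<^sub>R axis i 1)\<bar> \<le> C'"
      using h_props(4)[where t=t and \<epsilon>=\<epsilon> and y=y] by blast
    have "(\<lambda>x. (t * H (\<epsilon> *\<^sub>R x - y)) * uu (x - a)) \<in> H1"
      by (rule H1_mult[OF g(1) g(2) g(3) g(4) h_props(1)[where t=t and \<epsilon>=\<epsilon> and y=y] h_props(2)[where t=t and \<epsilon>=\<epsilon> and y=y] h_props(3)[where t=t and \<epsilon>=\<epsilon> and y=y]])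
        (use C' in blast)
    moreover have "(\<lambda>x. t * \<Psi> x) = (\<lambda>x. (t * H (\<epsilon> *\<^sub>R x - y)) * uu (x - a))"
      by (simp add: Psi_x fun_eq_iff)
    ultimately show ?thesis by simp
  qed
  have Vm[measurable]: "V \<in> borel_measurable borel" using borel_measurable_continuous_onI[OF Vc] .
  have "compact (V ` cball y T)"
    by (rule compact_continuous_image) (auto intro: continuous_on_subset[OF Vc])
  then have "bounded (V ` cball y T)" by (rule compact_imp_bounded)
  then obtain Cv where Cv: "\<And>z. z \<in> V ` cball y T \<Longrightarrow> norm z \<le> Cv"
    unfolding bounded_iff by metis
  have supp: "\<Psi> x \<noteq> 0 \<Longrightarrow> \<epsilon> *\<^sub>R x \<in> cball y T" for x
  proof -
    assume "\<Psi> x \<noteq> 0"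
    then have "H (\<epsilon> *\<^sub>R x - y) \<noteq> 0" by (auto simp: Psi_x)
    then have "norm (\<epsilon> *\<^sub>R x - y) < T" by (rule H_supp)
    then show ?thesis by (simp add: dist_norm norm_minus_commute)
  qed
  have P5: "integrable lborel (\<lambda>x. V (\<epsilon> *\<^sub>R x) * (t * \<Psi> x)\<^sup>2)" for t
  proof (rule Bochner_Integration.integrable_bound)
    have "integrable lborel (\<lambda>x. (t * \<Psi> x)\<^sup>2)" using P4[of t] unfolding H1_def by blast
    then show "integrable lborel (\<lambda>x. Cv * (t * \<Psi> x)\<^sup>2)" by simp
    show "(\<lambda>x. V (\<epsilon> *\<^sub>R x) * (t * \<Psi> x)\<^sup>2) \<in> borel_measurable lborel" by measurable
    show "AE x in lborel. norm (V (\<epsilon> *\<^sub>R x) * (t * \<Psi> x)\<^sup>2) \<le> norm (Cv * (t * \<Psi> x)\<^sup>2)"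
    proof (rule AE_I2)
      fix x
      show "norm (V (\<epsilon> *\<^sub>R x) * (t * \<Psi> x)\<^sup>2) \<le> norm (Cv * (t * \<Psi> x)\<^sup>2)"
      proof (cases "\<Psi> x = 0")
        case False
        then have "norm (V (\<epsilon> *\<^sub>R x)) \<le> Cv" using supp Cv by blast
        then have "\<bar>V (\<epsilon> *\<^sub>R x)\<bar> \<le> \<bar>Cv\<bar>" by simp
        then show ?thesis by (simp add: abs_mult mult_right_mono)
      qed simp
    qed
  qed
  have Psi2: "integrable lborel (\<lambda>x. (\<Psi> x)\<^sup>2)" using P4[of 1] unfolding H1_def by simp
  define c where "c = (\<integral>x. phi_pot \<Psi> x * (\<Psi> x)\<^sup>2 \<partial>lborel)"
  have cpos: "c > 0" unfolding c_def by (rule phi_pos[OF Psim Psi2 P3])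
  have cscale: "(\<integral>x. phi_pot (\<lambda>x. t * \<Psi> x) x * (t * \<Psi> x)\<^sup>2 \<partial>lborel) = t ^ 4 * c" for t
  proof -
    have ph: "phi_pot (\<lambda>x. t * \<Psi> x) x = t\<^sup>2 * phi_pot \<Psi> x" for x
    proof -
      have eqn: "(\<lambda>y. (1 - exp (- dist x y)) / dist x y * (t * \<Psi> y)\<^sup>2) =
            (\<lambda>y. t\<^sup>2 * ((1 - exp (- dist x y)) / dist x y * (\<Psi> y)\<^sup>2))"
        by (simp add: fun_eq_iff power_mult_distrib)
      show ?thesis unfolding phi_pot_def eqn by (rule integral_mult_right_zero)
    qed
    have "(\<lambda>x. phi_pot (\<lambda>x. t * \<Psi> x) x * (t * \<Psi> x)\<^sup>2) = (\<lambda>x. t ^ 4 * (phi_pot \<Psi> x * (\<Psi> x)\<^sup>2))"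
      by (simp add: fun_eq_iff ph power_mult_distrib algebra_simps power2_eq_square power4_eq_xxxx)
    then show ?thesis unfolding c_def by simp
  qed
  have inN: "(\<lambda>x. t * \<Psi> x) \<in> Neh_eps V \<epsilon> \<longleftrightarrow> t ^ 4 * c = 1" for t
    unfolding Neh_eps_def W_sp_def using P4[of t] P5[of t] cscale[of t] by simp
  have EX: "\<exists>!t. t > 0 \<and> (\<lambda>x. t * \<Psi> x) \<in> Neh_eps V \<epsilon>"
  proof
    define t1 where "t1 = root 4 (1 / c)"
    have t1p: "t1 > 0" unfolding t1_def using cpos by (simp add: real_root_gt_zero)
    have "t1 ^ 4 = 1 / c" unfolding t1_def using cpos by simp
    then have "t1 ^ 4 * c = 1" using cpos by simp
    then show "t1 > 0 \<and> (\<lambda>x. t1 * \<Psi> x) \<in> Neh_eps V \<epsilon>" using t1p inN by simp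
    fix t2 assume "t2 > 0 \<and> (\<lambda>x. t2 * \<Psi> x) \<in> Neh_eps V \<epsilon>"
    then have t2: "t2 > 0" "t2 ^ 4 * c = 1" using inN by auto
    have "t2 ^ 4 * c = t1 ^ 4 * c" using t2(2) \<open>t1 ^ 4 * c = 1\<close> by linarith
    then have "t2 ^ 4 = t1 ^ 4" using cpos by simp
    then show "t2 = t1" by (rule power_eq_imp_eq_base) (use t2 t1p in auto)
  qed
  define t0 where "t0 = t_eps V \<epsilon> \<Psi>"
  have t0p: "t0 > 0" unfolding t0_def t_eps_def using theI'[OF EX] by blast
  have Phi_eq: "Phi V \<eta> uu \<epsilon> y = (\<lambda>x. t0 * \<Psi> x)"
    unfolding Phi_def t0_def \<Psi>_def ..
  define B where "B = (\<integral>z. (w z)\<^sup>2 \<partial>lborel)"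
  have s1: "(\<integral>x. (t0 * \<Psi> x)\<^sup>2 *\<^sub>R chi \<rho> (\<epsilon> *\<^sub>R x) \<partial>lborel) =
      t0\<^sup>2 *\<^sub>R (\<integral>x. (\<Psi> x)\<^sup>2 *\<^sub>R chi \<rho> (\<epsilon> *\<^sub>R x) \<partial>lborel)"
  proof -
    have eqn: "(\<lambda>x. (t0 * \<Psi> x)\<^sup>2 *\<^sub>R chi \<rho> (\<epsilon> *\<^sub>R x)) = (\<lambda>x. t0\<^sup>2 *\<^sub>R ((\<Psi> x)\<^sup>2 *\<^sub>R chi \<rho> (\<epsilon> *\<^sub>R x)))"
      by (simp add: fun_eq_iff power_mult_distrib)
    show ?thesis unfolding eqn by (rule integral_scaleR_right)
  qed
  have s2: "(\<integral>x. (t0 * \<Psi> x)\<^sup>2 \<partial>lborel) = t0\<^sup>2 * B"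
    using P2 by (simp add: power_mult_distrib B_def)
  have s3: "(\<integral>x. (\<Psi> x)\<^sup>2 *\<^sub>R chi \<rho> (\<epsilon> *\<^sub>R x) \<partial>lborel) = (\<integral>x. (\<Psi> x)\<^sup>2 *\<^sub>R (\<epsilon> *\<^sub>R x) \<partial>lborel)"
  proof (rule Bochner_Integration.integral_cong[OF refl])
    fix x
    show "(\<Psi> x)\<^sup>2 *\<^sub>R chi \<rho> (\<epsilon> *\<^sub>R x) = (\<Psi> x)\<^sup>2 *\<^sub>R (\<epsilon> *\<^sub>R x)"
    proof (cases "\<Psi> x = 0")
      case False
      then have "\<epsilon> *\<^sub>R x \<in> cball y T" by (rule supp)
      then have d: "dist (\<epsilon> *\<^sub>R x) y \<le> T" by (simp add: dist_commute)
      have "infdist (\<epsilon> *\<^sub>R x) {z. V z = V0} \<le> dist (\<epsilon> *\<^sub>R x) y"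
        by (rule infdist_le) (simp add: My)
      then have "infdist (\<epsilon> *\<^sub>R x) {z. V z = V0} \<le> 2 * T" using d Tpos by linarith
      then have "\<epsilon> *\<^sub>R x \<in> ball 0 \<rho>" using Mb by blast
      then have "norm (\<epsilon> *\<^sub>R x) \<le> \<rho>" by (simp add: mem_ball_0)
      then show ?thesis by (simp add: chi_def)
    qed simp
  qed
  have s4: "(\<integral>x. (\<Psi> x)\<^sup>2 *\<^sub>R (\<epsilon> *\<^sub>R x) \<partial>lborel) = B *\<^sub>R y"
  proof -
    have m: "(\<lambda>x. (\<Psi> x)\<^sup>2 *\<^sub>R (\<epsilon> *\<^sub>R x)) \<in> borel_measurable lborel" by measurable
    have ea: "\<epsilon> *\<^sub>R a = y" unfolding a_def using e0 by simp
    have eqn: "(\<lambda>z. (\<Psi> (a + z))\<^sup>2 *\<^sub>R (\<epsilon> *\<^sub>R (a + z))) = (\<lambda>z. (w z)\<^sup>2 *\<^sub>R y + \<epsilon> *\<^sub>R ((w z)\<^sup>2 *\<^sub>R z))"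
      by (simp add: fun_eq_iff Psi_s scaleR_right_distrib ea)
    have int1: "integrable lborel (\<lambda>z. (w z)\<^sup>2 *\<^sub>R y)" using w2 by (rule integrable_scaleR_left)
    have int2: "integrable lborel (\<lambda>z. (w z)\<^sup>2 *\<^sub>R z)"
    proof (rule Bochner_Integration.integrable_bound)
      show "integrable lborel (\<lambda>z. (T / \<epsilon>) * (w z)\<^sup>2)" using w2 by simp
      show "(\<lambda>z. (w z)\<^sup>2 *\<^sub>R z) \<in> borel_measurable lborel" by measurable
      show "AE z in lborel. norm ((w z)\<^sup>2 *\<^sub>R z) \<le> norm ((T / \<epsilon>) * (w z)\<^sup>2)"
      proof (rule AE_I2)
        fix z
        show "norm ((w z)\<^sup>2 *\<^sub>R z) \<le> norm ((T / \<epsilon>) * (w z)\<^sup>2)"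
        proof (cases "w z = 0")
          case False
          then have "H (\<epsilon> *\<^sub>R z) \<noteq> 0" by (auto simp: w_def)
          then have "norm (\<epsilon> *\<^sub>R z) < T" by (rule H_supp)
          then have "\<epsilon> * norm z < T" using eps by simp
          then have nz: "norm z \<le> T / \<epsilon>" using eps by (simp add: field_simps)
          have "norm ((w z)\<^sup>2 *\<^sub>R z) = (w z)\<^sup>2 * norm z" by simp
          also have "\<dots> \<le> (w z)\<^sup>2 * (T / \<epsilon>)" by (rule mult_left_mono[OF nz]) simp
          also have "\<dots> = norm ((T / \<epsilon>) * (w z)\<^sup>2)" using eps Tpos by simp
          finally show ?thesis .
        qed simp
      qed
    qed
    have odd: "(\<integral>z. (w z)\<^sup>2 *\<^sub>R z \<partial>lborel) = 0"
    proof -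
      have m2: "(\<lambda>z. (w z)\<^sup>2 *\<^sub>R z) \<in> borel_measurable lborel" by measurable
      have wm: "w (- z) = w z" for z
      proof -
        have "uu (- z) = uu z" using rad[rule_format, of "- z" z] by simp
        then show ?thesis by (simp add: w_def H_def)
      qed
      have "(\<integral>z. (w (- z))\<^sup>2 *\<^sub>R (- z) \<partial>lborel) = (\<integral>z. (w z)\<^sup>2 *\<^sub>R z \<partial>lborel)"
        using lb_reflect[OF m2] by simp
      then have "- (\<integral>z. (w z)\<^sup>2 *\<^sub>R z \<partial>lborel) = (\<integral>z. (w z)\<^sup>2 *\<^sub>R z \<partial>lborel)"
        by (simp add: wm)
      then have hI: "- (\<integral>z. (w z)\<^sup>2 *\<^sub>R z \<partial>lborel) = (\<integral>z. (w z)\<^sup>2 *\<^sub>R z \<partial>lborel)" .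
      have "(\<integral>z. (w z)\<^sup>2 *\<^sub>R z \<partial>lborel) + (\<integral>z. (w z)\<^sup>2 *\<^sub>R z \<partial>lborel) =
            - (\<integral>z. (w z)\<^sup>2 *\<^sub>R z \<partial>lborel) + (\<integral>z. (w z)\<^sup>2 *\<^sub>R z \<partial>lborel)"
        by (simp only: hI)
      also have "\<dots> = 0" by (rule add.left_inverse)
      finally have "(\<integral>z. (w z)\<^sup>2 *\<^sub>R z \<partial>lborel) + (\<integral>z. (w z)\<^sup>2 *\<^sub>R z \<partial>lborel) = 0" .
      then have "(2::real) *\<^sub>R (\<integral>z. (w z)\<^sup>2 *\<^sub>R z \<partial>lborel) = 0" by (simp only: scaleR_2)
      then show ?thesis by simp
    qed
    have "(\<integral>x. (\<Psi> x)\<^sup>2 *\<^sub>R (\<epsilon> *\<^sub>R x) \<partial>lborel) = (\<integral>z. (\<Psi> (a + z))\<^sup>2 *\<^sub>R (\<epsilon> *\<^sub>R (a + z)) \<partial>lborel)"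
      using lb_trans_plus(2)[OF m, of a] by simp
    also have "\<dots> = (\<integral>z. (w z)\<^sup>2 *\<^sub>R y \<partial>lborel) + (\<integral>z. \<epsilon> *\<^sub>R ((w z)\<^sup>2 *\<^sub>R z) \<partial>lborel)"
      unfolding eqn by (rule Bochner_Integration.integral_add[OF int1 integrable_scaleR_right[OF int2]])
    also have "\<dots> = B *\<^sub>R y"
    proof -
      have a1: "(\<integral>z. (w z)\<^sup>2 *\<^sub>R y \<partial>lborel) = B *\<^sub>R y" by (simp add: B_def w2)
      have a2: "(\<integral>z. \<epsilon> *\<^sub>R ((w z)\<^sup>2 *\<^sub>R z) \<partial>lborel) = \<epsilon> *\<^sub>R (\<integral>z. (w z)\<^sup>2 *\<^sub>R z \<partial>lborel)"
        by (rule integral_scaleR_right)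
      show ?thesis by (simp only: a1 a2 odd) simp
    qed
    finally show ?thesis .
  qed
  have k: "inverse (t0\<^sup>2) * inverse B * (t0\<^sup>2 * B) = 1" using t0p P1 by (simp add: B_def field_simps)
  show ?thesis
    using k unfolding Phi_eq beta_def s1 s2 s3 s4 by simp
qed

end

theorem lemma5p2:
  fixes V :: "R3 \<Rightarrow> real" and V0 :: real and f :: "real \<Rightarrow> real"
    and uu :: "R3 \<Rightarrow> real" and \<eta> :: "real \<Rightarrow> real" and T \<rho> :: real
  assumes V_cont: "continuous_on UNIV V"
    and V0_pos: "0 < V0" and V0_min: "\<forall>x. V0 \<le> V x" and V_0: "V 0 = V0"
    and f_cont: "continuous_on UNIV f"
    and f_nonneg: "\<forall>u\<ge>0. f u \<ge> 0" and f_neg: "\<forall>u\<le>0. f u = 0"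
    and f_inf: "\<exists>q. 2 < q \<and> q < 6 \<and> ((\<lambda>u. f u / u powr (q - 1)) \<longlongrightarrow> 0) at_top"
    and f_zero: "((\<lambda>u. f u / u) \<longlongrightarrow> 0) (at 0)"
    and uu_radial: "\<forall>x y. norm x = norm y \<longrightarrow> uu x = uu y"
    and uu_nonpos: "\<forall>x. uu x \<le> 0"
    and uu_in: "uu \<in> Neh_V0"
    and uu_min: "\<forall>u\<in>Neh_V0. E_V0 f V0 uu \<le> E_V0 f V0 u"
    and T_pos: "0 < T" and \<rho>_pos: "0 < \<rho>"
    and \<eta>_smooth: "\<forall>k. \<forall>t>0. (deriv ^^ k) \<eta> differentiable (at t)"
    and \<eta>_range: "\<forall>t\<ge>0. 0 \<le> \<eta> t \<and> \<eta> t \<le> 1"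
    and \<eta>_mono: "\<forall>s t. 0 \<le> s \<and> s \<le> t \<longrightarrow> \<eta> t \<le> \<eta> s"
    and \<eta>_one: "\<forall>t. 0 \<le> t \<and> t \<le> T / 2 \<longrightarrow> \<eta> t = 1"
    and \<eta>_zero: "\<forall>t\<ge>T. \<eta> t = 0"
    and M_ball: "{x. infdist x {z. V z = V0} \<le> 2 * T} \<subseteq> ball 0 \<rho>"
  shows "uniform_limit {z. V z = V0} (\<lambda>\<epsilon> y. beta \<rho> \<epsilon> (Phi V \<eta> uu \<epsilon> y)) (\<lambda>y. y) (at_right 0)"
proof -
  interpret etactx \<eta> T
  proof
    show "0 < T" by (rule T_pos)
    show "\<eta> differentiable (at t)" if "t > 0" for t
      using \<eta>_smooth[rule_format, of t 0] that by simp
    show "deriv \<eta> differentiable (at t)" if "t > 0" for t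
      using \<eta>_smooth[rule_format, of t 1] that by simp
    show "\<eta> t = 1" if "0 \<le> t" "t \<le> T / 2" for t using \<eta>_one that by blast
    show "\<eta> t = 0" if "t \<ge> T" for t using \<eta>_zero that by blast
    show "0 \<le> \<eta> t \<and> \<eta> t \<le> 1" if "0 \<le> t" for t using \<eta>_range that by blast
  qed
  have uH: "uu \<in> H1" and c1: "(\<integral>x. phi_pot uu x * (uu x)\<^sup>2 \<partial>lborel) = 1"
    using uu_in unfolding Neh_V0_def by auto
  have "\<exists>R>0. \<not> (AE z in lborel. norm z \<le> R \<longrightarrow> uu z = 0)"
  proof (rule ccontr)
    assume "\<not> ?thesis"
    then have "\<forall>n::nat. AE z in lborel. norm z \<le> real (Suc n) \<longrightarrow> uu z = 0" by auto
    then have "AE z in lborel. \<forall>n::nat. norm z \<le> real (Suc n) \<longrightarrow> uu z = 0"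
      by (rule AE_all_countable[THEN iffD2])
    then have "AE z in lborel. uu z = 0"
    proof eventually_elim
      case (elim z)
      obtain n where "norm z \<le> real n" using real_arch_simple by blast
      then have "norm z \<le> real (Suc n)" by simp
      then show ?case using elim by blast
    qed
    then have "AE x in lborel. phi_pot uu x * (uu x)\<^sup>2 = 0" by eventually_elim simp
    then have "(\<integral>x. phi_pot uu x * (uu x)\<^sup>2 \<partial>lborel) = 0" by (rule integral_eq_zero_AE)
    then show False using c1 by simp
  qed
  then obtain R where R0: "R > 0" and R: "\<not> (AE z in lborel. norm z \<le> R \<longrightarrow> uu z = 0)" by blast
  define \<epsilon>0 where "\<epsilon>0 = T / (2 * R)"
  have e0p: "\<epsilon>0 > 0" unfolding \<epsilon>0_def using R0 T_pos by simp
  have key: "beta \<rho> \<epsilon> (Phi V \<eta> uu \<epsilon> y) = y" if "0 < \<epsilon>" "\<epsilon> < \<epsilon>0" "y \<in> {z. V z = V0}" for \<epsilon> y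
  proof (rule claim[OF uH uu_radial R])
    show "0 < \<epsilon>" by (rule that(1))
    have "\<epsilon> * R < \<epsilon>0 * R" using that(2) R0 by simp
    also have "\<epsilon>0 * R = T / 2" unfolding \<epsilon>0_def using R0 by simp
    finally show "\<epsilon> * R < T / 2" .
    show "continuous_on UNIV V" by (rule V_cont)
    show "V y = V0" using that(3) by simp
    show "{x. infdist x {z. V z = V0} \<le> 2 * T} \<subseteq> ball 0 \<rho>" by (rule M_ball)
  qed
  show ?thesis
    unfolding uniform_limit_iff
  proof (intro allI impI)
    fix e :: real assume "e > 0"
    show "\<forall>\<^sub>F \<epsilon> in at_right 0. \<forall>y\<in>{z. V z = V0}. dist (beta \<rho> \<epsilon> (Phi V \<eta> uu \<epsilon> y)) y < e"
      unfolding eventually_at_right_field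
      using e0p key \<open>e > 0\<close> by auto
  qed
qed

end
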